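(* Let $k$ be a real division algebra, $\mathcal Z\subset k$ a discrete subring closed under conjugation, $(a_n)_{n\ge1}$ a sequence in $\mathcal Z$ and $x_0\in k$ with $x_n=T_{a_n}\cdots T_{a_1}x_0$ defined and $\|x_n\|<1$ for all $n\ge0$. Define $Q[\cdot]$ recursively by $P[a_n]=1$, $Q[a_n]=a_n$, and for $i<n$, $P[a_i,\dots,a_n]=Q[a_{i+1},\dots,a_n]$, $Q[a_i,\dots,a_n]=a_iQ[a_{i+1},\dots,a_n]+P[a_{i+1},\dots,a_n]$. Then $Q[a_i,\dots,a_n]\ne0$ for every $n$ and every $1\le i<n$.
   Context: $k\in\{\mathbb{R},\mathbb{C},\mathbb{H},\mathbb{O}\}$ with Euclidean norm $\|x\|^2=x\overline x$; $T_ax=x^{-1}-a$. Discrete means discrete in the Euclidean topology of $k\cong\mathbb{R}^d$. *)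

theory Defs
  imports "HOL-Analysis.Analysis"
begin

text \<open>A real division algebra k in the sense of the paper (R, C, H or O) is modelled,
  via Hurwitz's theorem, as a finite-dimensional Euclidean space with a bilinear
  (possibly non-associative, non-commutative) multiplication with two-sided unit e
  whose Euclidean norm is multiplicative.\<close>

definition normed_div_alg :: "('a::euclidean_space \<Rightarrow> 'a \<Rightarrow> 'a) \<Rightarrow> 'a \<Rightarrow> bool" where
  "normed_div_alg mul e \<longleftrightarrow> bounded_bilinear mul \<and> (\<forall>x. mul e x = x \<and> mul x e = x)
     \<and> (\<forall>x y. norm (mul x y) = norm x * norm y)"

definition cnj :: "'a::euclidean_space \<Rightarrow> 'a \<Rightarrow> 'a" where
  "cnj e x = (2 * (x \<bullet> e)) *\<^sub>R e - x"

definition dinv :: "'a::euclidean_space \<Rightarrow> 'a \<Rightarrow> 'a" where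
  "dinv e x = (1 / (norm x)\<^sup>2) *\<^sub>R cnj e x"

definition Tmap :: "'a::euclidean_space \<Rightarrow> 'a \<Rightarrow> 'a \<Rightarrow> 'a" where
  "Tmap e a x = dinv e x - a"

definition subring :: "('a::euclidean_space \<Rightarrow> 'a \<Rightarrow> 'a) \<Rightarrow> 'a \<Rightarrow> 'a set \<Rightarrow> bool" where
  "subring mul e Z \<longleftrightarrow> 0 \<in> Z \<and> e \<in> Z \<and> (\<forall>x\<in>Z. \<forall>y\<in>Z. x + y \<in> Z \<and> x - y \<in> Z \<and> mul x y \<in> Z)"

text \<open>pq mul e a n k = (P[a_{n-k},...,a_n], Q[a_{n-k},...,a_n]).\<close>
fun pq :: "('a::euclidean_space \<Rightarrow> 'a \<Rightarrow> 'a) \<Rightarrow> 'a \<Rightarrow> (nat \<Rightarrow> 'a) \<Rightarrow> nat \<Rightarrow> nat \<Rightarrow> 'a \<times> 'a" where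
  "pq mul e a n 0 = (e, a n)"
| "pq mul e a n (Suc k) = (snd (pq mul e a n k), mul (a (n - Suc k)) (snd (pq mul e a n k)) + fst (pq mul e a n k))"

definition Qc :: "('a::euclidean_space \<Rightarrow> 'a \<Rightarrow> 'a) \<Rightarrow> 'a \<Rightarrow> (nat \<Rightarrow> 'a) \<Rightarrow> nat \<Rightarrow> nat \<Rightarrow> 'a" where
  "Qc mul e a i n = snd (pq mul e a n (n - i))"

end

theory Submission
  imports Defs
begin


lemma nda_bb: "normed_div_alg mul e \<Longrightarrow> bounded_bilinear mul"
  by (simp add: normed_div_alg_def)
lemma nda_unit: "normed_div_alg mul e \<Longrightarrow> mul e x = x" "normed_div_alg mul e \<Longrightarrow> mul x e = x"
  by (simp_all add: normed_div_alg_def)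
lemma nda_norm: "normed_div_alg mul e \<Longrightarrow> norm (mul x y) = norm x * norm y"
  by (simp add: normed_div_alg_def)

lemma nda_norm_e:
  fixes mul :: "'a::euclidean_space \<Rightarrow> 'a \<Rightarrow> 'a"
  assumes A: "normed_div_alg mul e" shows "norm e = 1"
proof -
  have 1: "norm e = norm e * norm e" using nda_norm[OF A, of e e] nda_unit[OF A, of e] by simp
  have "e \<noteq> 0"
  proof
    assume "e = 0"
    then have "\<And>x. x = (0::'a)" using nda_unit(1)[OF A] bounded_bilinear.zero_left[OF nda_bb[OF A]] by metis
    moreover have "(SOME i. i \<in> (Basis::'a set)) \<noteq> 0"
      by (metis nonempty_Basis someI_ex ex_in_conv zero_not_in_Basis)
    ultimately show False by blast
  qed
  then show ?thesis using 1 by (metis mult_cancel_right1 norm_eq_zero)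
qed

lemma sqn: "norm (x::'a::real_inner) ^ 2 = x \<bullet> x" by (simp add: power2_norm_eq_inner)

lemma nda_inner1:
  fixes mul :: "'a::euclidean_space \<Rightarrow> 'a \<Rightarrow> 'a"
  assumes A: "normed_div_alg mul e"
  shows "mul x y \<bullet> mul x z = (norm x)^2 * (y \<bullet> z)"
proof -
  have bb: "bounded_bilinear mul" by (rule nda_bb[OF A])
  have "(norm (mul x (y+z)))^2 = (norm x)^2 * (norm (y+z))^2"
    using nda_norm[OF A] by (simp add: power_mult_distrib)
  moreover have "mul x (y+z) = mul x y + mul x z" by (rule bounded_bilinear.add_right[OF bb])
  ultimately have "(mul x y + mul x z) \<bullet> (mul x y + mul x z) = (norm x)^2 * ((y+z) \<bullet> (y+z))"
    by (simp add: sqn)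
  moreover have "mul x y \<bullet> mul x y = (norm x)^2 * (y \<bullet> y)" "mul x z \<bullet> mul x z = (norm x)^2 * (z \<bullet> z)"
    using nda_norm[OF A] by (simp_all add: sqn[symmetric] power_mult_distrib)
  ultimately show ?thesis by (simp add: inner_add_left inner_add_right inner_commute algebra_simps)
qed

lemma nda_inner2:
  fixes mul :: "'a::euclidean_space \<Rightarrow> 'a \<Rightarrow> 'a"
  assumes A: "normed_div_alg mul e"
  shows "mul x y \<bullet> mul w z + mul w y \<bullet> mul x z = 2 * (x \<bullet> w) * (y \<bullet> z)"
proof -
  have bb: "bounded_bilinear mul" by (rule nda_bb[OF A])
  have "mul (x+w) y \<bullet> mul (x+w) z = (norm (x+w))^2 * (y \<bullet> z)" by (rule nda_inner1[OF A])
  moreover have "mul (x+w) y = mul x y + mul w y" "mul (x+w) z = mul x z + mul w z"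
    by (simp_all add: bounded_bilinear.add_left[OF bb])
  moreover have "mul x y \<bullet> mul x z = (norm x)^2 * (y \<bullet> z)" "mul w y \<bullet> mul w z = (norm w)^2 * (y \<bullet> z)"
    by (simp_all add: nda_inner1[OF A])
  ultimately show ?thesis
    by (simp add: sqn inner_add_left inner_add_right inner_commute algebra_simps)
qed

lemma nda_adj:
  fixes mul :: "'a::euclidean_space \<Rightarrow> 'a \<Rightarrow> 'a"
  assumes A: "normed_div_alg mul e"
  shows "mul u y \<bullet> z = y \<bullet> mul (cnj e u) z"
proof -
  have bb: "bounded_bilinear mul" by (rule nda_bb[OF A])
  have "mul u y \<bullet> mul e z + mul e y \<bullet> mul u z = 2 * (u \<bullet> e) * (y \<bullet> z)" by (rule nda_inner2[OF A])
  then have "mul u y \<bullet> z = 2 * (u \<bullet> e) * (y \<bullet> z) - y \<bullet> mul u z" by (simp add: nda_unit[OF A])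
  moreover have "mul (cnj e u) z = (2 * (u \<bullet> e)) *\<^sub>R mul e z - mul u z"
    unfolding cnj_def by (simp add: bounded_bilinear.diff_left[OF bb] bounded_bilinear.scaleR_left[OF bb])
  ultimately show ?thesis by (simp add: nda_unit[OF A] inner_diff_right)
qed

lemma cnj_cnj:
  assumes "norm e = 1" shows "cnj e (cnj e u) = u"
proof -
  have "e \<bullet> e = 1" using assms by (simp add: sqn[symmetric])
  then show ?thesis unfolding cnj_def by (simp add: inner_diff_left algebra_simps scaleR_left_distrib)
qed

lemma nda_left_inv:
  fixes mul :: "'a::euclidean_space \<Rightarrow> 'a \<Rightarrow> 'a"
  assumes A: "normed_div_alg mul e"
  shows "mul (cnj e u) (mul u v) = (norm u)^2 *\<^sub>R v"
proof -
  let ?w = "mul (cnj e u) (mul u v) - (norm u)^2 *\<^sub>R v"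
  have "\<And>z. mul (cnj e u) (mul u v) \<bullet> z = (norm u)^2 * (v \<bullet> z)"
  proof -
    fix z
    have "mul (cnj e u) (mul u v) \<bullet> z = mul u v \<bullet> mul (cnj e (cnj e u)) z" by (rule nda_adj[OF A])
    also have "\<dots> = mul u v \<bullet> mul u z" using cnj_cnj[OF nda_norm_e[OF A]] by simp
    also have "\<dots> = (norm u)^2 * (v \<bullet> z)" by (rule nda_inner1[OF A])
    finally show "mul (cnj e u) (mul u v) \<bullet> z = (norm u)^2 * (v \<bullet> z)" .
  qed
  then have "?w \<bullet> ?w = 0" by (simp add: inner_diff_left)
  then show ?thesis by simp
qed



lemma cnj_linear: "cnj e (x - y) = cnj e x - cnj e y" "cnj e (c *\<^sub>R x) = c *\<^sub>R cnj e x"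
  unfolding cnj_def by (simp_all add: inner_diff_left algebra_simps scaleR_diff_right)

lemma norm_cnj: assumes "norm e = 1" shows "norm (cnj e u) = norm u"
proof -
  have ee: "e \<bullet> e = 1" using assms by (simp add: sqn[symmetric])
  have "(norm (cnj e u))^2 = (norm u)^2"
    unfolding sqn cnj_def using ee by (simp add: inner_diff_left inner_diff_right inner_commute algebra_simps power2_eq_square)
  then show ?thesis by simp
qed

lemma norm_dinv: assumes "norm e = 1" shows "norm (dinv e u) = 1 / norm u"
  unfolding dinv_def using norm_cnj[OF assms]
  by (simp add: power2_eq_square divide_simps)

lemma dinv_dinv: assumes "norm e = 1" "u \<noteq> 0" shows "dinv e (dinv e u) = u"
proof -
  have "dinv e (dinv e u) = (1 / (norm (dinv e u))\<^sup>2) *\<^sub>R ((1 / (norm u)\<^sup>2) *\<^sub>R cnj e (cnj e u))"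
    unfolding dinv_def[of e "dinv e u"] unfolding dinv_def[of e u] by (simp add: cnj_linear)
  also have "\<dots> = u" using norm_dinv[OF assms(1)] cnj_cnj[OF assms(1)] assms(2) by (simp add: field_simps)
  finally show ?thesis .
qed

lemma dist_dinv: assumes "norm e = 1" "p \<noteq> 0" "q \<noteq> 0"
  shows "norm (dinv e p - dinv e q) = norm (p - q) / (norm p * norm q)"
proof -
  have "dinv e p - dinv e q = cnj e ((1 / (norm p)\<^sup>2) *\<^sub>R p - (1 / (norm q)\<^sup>2) *\<^sub>R q)"
    unfolding dinv_def by (simp add: cnj_linear)
  then have "norm (dinv e p - dinv e q) = norm ((1 / (norm p)\<^sup>2) *\<^sub>R p - (1 / (norm q)\<^sup>2) *\<^sub>R q)"
    using norm_cnj[OF assms(1)] by simp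
  moreover have "(norm ((1 / (norm p)\<^sup>2) *\<^sub>R p - (1 / (norm q)\<^sup>2) *\<^sub>R q))^2 = (norm (p - q) / (norm p * norm q))^2"
  proof -
    have np: "norm p > 0" "norm q > 0" using assms by auto
    have pp: "p \<bullet> p = (norm p)^2" "q \<bullet> q = (norm q)^2" by (simp_all add: sqn)
    have "(norm ((1 / (norm p)\<^sup>2) *\<^sub>R p - (1 / (norm q)\<^sup>2) *\<^sub>R q))^2
       = (1 / (norm p)\<^sup>2)^2 * (p \<bullet> p) - 2 * (1 / (norm p)\<^sup>2) * (1 / (norm q)\<^sup>2) * (p \<bullet> q) + (1 / (norm q)\<^sup>2)^2 * (q \<bullet> q)"
      unfolding sqn by (simp add: inner_diff_left inner_diff_right inner_commute power2_eq_square algebra_simps)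
    also have "\<dots> = ((norm p)^2 - 2 * (p \<bullet> q) + (norm q)^2) / ((norm p)^2 * (norm q)^2)"
      unfolding pp using np by (simp add: field_simps power2_eq_square)
    also have "(norm p)^2 - 2 * (p \<bullet> q) + (norm q)^2 = (norm (p - q))^2"
      unfolding sqn by (simp add: inner_diff_left inner_diff_right inner_commute)
    finally show ?thesis by (simp add: power_divide power_mult_distrib)
  qed
  ultimately show ?thesis
    by (metis divide_nonneg_nonneg mult_nonneg_nonneg norm_ge_zero power2_eq_iff_nonneg)
qed

lemma nda_dinv_left:
  fixes mul :: "'a::euclidean_space \<Rightarrow> 'a \<Rightarrow> 'a"
  assumes A: "normed_div_alg mul e" and "u \<noteq> 0"
  shows "mul (dinv e u) (mul u v) = v"
  unfolding dinv_def using assms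
  by (simp add: bounded_bilinear.scaleR_left[OF nda_bb[OF A]] nda_left_inv[OF A])

lemma Z_norm_ge1:
  fixes mul :: "'a::euclidean_space \<Rightarrow> 'a \<Rightarrow> 'a"
  assumes A: "normed_div_alg mul e"
    and ring: "subring mul e Z"
    and disc: "\<forall>z\<in>Z. \<not> z islimpt Z"
    and conj_closed: "\<forall>z\<in>Z. cnj e z \<in> Z"
    and z: "z \<in> Z" "z \<noteq> 0"
  shows "norm z \<ge> 1"
proof (rule ccontr)
  assume "\<not> 1 \<le> norm z"
  define r where "r = (norm z)^2"
  have r: "0 < r" "r < 1" using z \<open>\<not> 1 \<le> norm z\<close> unfolding r_def
    by (auto simp: power_less_one_iff)
  have bb: "bounded_bilinear mul" by (rule nda_bb[OF A])
  have ne: "norm e = 1" by (rule nda_norm_e[OF A])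
  have rz: "r *\<^sub>R e \<in> Z"
  proof -
    have "mul (cnj e z) (mul z e) = r *\<^sub>R e" unfolding r_def by (rule nda_left_inv[OF A])
    then show ?thesis using ring z conj_closed nda_unit[OF A] unfolding subring_def by metis
  qed
  have pw: "(r ^ Suc k) *\<^sub>R e \<in> Z" for k
  proof (induction k)
    case 0 then show ?case using rz by simp
  next
    case (Suc k)
    have "mul ((r ^ Suc k) *\<^sub>R e) (r *\<^sub>R e) = (r ^ Suc (Suc k)) *\<^sub>R e"
      by (simp add: bounded_bilinear.scaleR_left[OF bb] bounded_bilinear.scaleR_right[OF bb] nda_unit[OF A] mult.commute)
    then show ?case using Suc rz ring unfolding subring_def by metis
  qed
  have "0 islimpt Z"
    unfolding islimpt_approachable
  proof (intro allI impI)
    fix \<epsilon> :: real assume "\<epsilon> > 0"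
    obtain k where k: "r ^ k < \<epsilon>" using real_arch_pow_inv[OF \<open>\<epsilon> > 0\<close> r(2)] by blast
    have "r ^ Suc k \<le> r ^ k" using r by (simp add: power_decreasing)
    then have "r ^ Suc k < \<epsilon>" using k by linarith
    then show "\<exists>x'\<in>Z. x' \<noteq> 0 \<and> dist x' 0 < \<epsilon>"
      using pw[of k] r ne k by (intro bexI[of _ "(r ^ Suc k) *\<^sub>R e"]) auto
  qed
  then show False using disc ring unfolding subring_def by auto
qed



lemma div_le_self_real: "(y::real) \<ge> 0 \<Longrightarrow> D \<ge> 1 \<Longrightarrow> y / D \<le> y"
  by (simp add: divide_le_eq mult_le_cancel_left1)

lemma main_ind:
  fixes mul :: "'a::euclidean_space \<Rightarrow> 'a \<Rightarrow> 'a" and e :: 'a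
    and Z :: "'a set" and a :: "nat \<Rightarrow> 'a" and x :: "nat \<Rightarrow> 'a"
  assumes alg: "normed_div_alg mul e"
    and ring: "subring mul e Z"
    and disc: "\<forall>z\<in>Z. \<not> z islimpt Z"
    and conj_closed: "\<forall>z\<in>Z. cnj e z \<in> Z"
    and aZ: "\<forall>n\<ge>1. a n \<in> Z"
    and defined: "\<forall>n. x n \<noteq> 0"
    and orbit: "\<forall>n. x (Suc n) = Tmap e (a (Suc n)) (x n)"
    and small: "\<forall>n. norm (x n) < 1"
  shows "k < n \<Longrightarrow> \<exists>t. snd (pq mul e a n k) \<noteq> 0 \<and> fst (pq mul e a n k) = mul t (snd (pq mul e a n k))
      \<and> snd (pq mul e a n k) \<in> Z \<and> fst (pq mul e a n k) \<in> Z
      \<and> norm (snd (pq mul e a n k)) * norm (t - x (n - Suc k)) < 1"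
proof (induction k)
  have ne: "norm e = 1" by (rule nda_norm_e[OF alg])
  have bb: "bounded_bilinear mul" by (rule nda_bb[OF alg])
  have key: "x (m - 1) = dinv e (a m + x m) \<and> norm (a m + x m) = 1 / norm (x (m - 1)) \<and> norm (a m + x m) > 1"
    if "m \<ge> 1" for m
  proof -
    have "x m = dinv e (x (m - 1)) - a m" using orbit[rule_format, of "m - 1"] that
      by (simp add: Tmap_def)
    then have d: "dinv e (x (m - 1)) = a m + x m" by simp
    have "x (m - 1) = dinv e (a m + x m)" using d dinv_dinv[OF ne defined[rule_format, of "m-1"]] by simp
    moreover have "norm (a m + x m) = 1 / norm (x (m - 1))" using d norm_dinv[OF ne] by metis
    moreover have "1 / norm (x (m - 1)) > 1" using small defined
      by (simp add: less_divide_eq)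
    ultimately show ?thesis by simp
  qed
  {
    case 0
    then have n1: "n \<ge> 1" by simp
    from key[OF n1] have k1: "x (n - 1) = dinv e (a n + x n)" "norm (a n + x n) = 1 / norm (x (n - 1))"
      "norm (a n + x n) > 1" by auto
    have an: "a n \<noteq> 0"
    proof
      assume "a n = 0" then show False using k1(3) small[rule_format, of n] by auto
    qed
    have anx: "a n + x n \<noteq> 0" using k1(3) by auto
    have "mul (dinv e (a n)) (a n) = e" using nda_dinv_left[OF alg an, of e] nda_unit[OF alg] by simp
    moreover have "norm (a n) * norm (dinv e (a n) - x (n - 1)) < 1"
    proof -
      have "norm (a n) * norm (dinv e (a n) - x (n - 1)) = norm (a n) * (norm (a n - (a n + x n)) / (norm (a n) * norm (a n + x n)))"
        using k1(1) dist_dinv[OF ne an anx] by simp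
      also have "\<dots> = norm (x n) / norm (a n + x n)" using an by simp
      also have "\<dots> = norm (x n) * norm (x (n - 1))" unfolding k1(2) by simp
      also have "\<dots> \<le> norm (x (n - 1))" using small[rule_format, of n]
        by (intro mult_left_le_one_le) auto
      also have "\<dots> < 1" using small by simp
      finally show ?thesis .
    qed
    ultimately have "\<exists>t. e = mul t (a n) \<and> norm (a n) * norm (t - x (n - 1)) < 1" by metis
    then show ?case using an aZ n1 ring unfolding subring_def by auto
  next
    case (Suc k)
    define m where "m = n - Suc (Suc k)"
    have m1: "Suc m \<ge> 1" by simp
    have nk: "n - Suc k = Suc m" "n - Suc (Suc k) = m" using Suc.prems unfolding m_def by auto
    obtain t where t: "snd (pq mul e a n k) \<noteq> 0" "fst (pq mul e a n k) = mul t (snd (pq mul e a n k))"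
      "snd (pq mul e a n k) \<in> Z" "fst (pq mul e a n k) \<in> Z"
      "norm (snd (pq mul e a n k)) * norm (t - x (Suc m)) < 1"
      using Suc.IH Suc.prems nk by auto
    define Q where "Q = snd (pq mul e a n k)"
    define P where "P = fst (pq mul e a n k)"
    from key[OF m1] have k1: "x m = dinv e (a (Suc m) + x (Suc m))"
      "norm (a (Suc m) + x (Suc m)) = 1 / norm (x m)" "norm (a (Suc m) + x (Suc m)) > 1" by auto
    have Q1: "norm Q \<ge> 1" using Z_norm_ge1[OF alg ring disc conj_closed] t unfolding Q_def by blast
    have tx: "norm (t - x (Suc m)) < 1"
    proof -
      have "norm (t - x (Suc m)) \<le> norm Q * norm (t - x (Suc m))" using Q1
        by (simp add: mult_le_cancel_right1)
      then show ?thesis using t(5) unfolding Q_def by linarith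
    qed
    define d where "d = a (Suc m) + t"
    define D where "D = a (Suc m) + x (Suc m)"
    have "norm D \<le> norm d + norm (t - x (Suc m))"
      using norm_triangle_ineq[of d "x (Suc m) - t"] unfolding d_def D_def by (simp add: norm_minus_commute)
    then have dpos: "norm d > 0" using tx k1(3) unfolding D_def by linarith
    then have d0: "d \<noteq> 0" by auto
    have D0: "D \<noteq> 0" using k1(3) unfolding D_def by auto
    have Qs: "snd (pq mul e a n (Suc k)) = mul d Q" "fst (pq mul e a n (Suc k)) = Q"
      using nk t(2) unfolding Q_def d_def
      by (simp_all add: Let_def bounded_bilinear.add_left[OF bb])
    have "mul d Q \<noteq> 0" using nda_norm[OF alg, of d Q] d0 t(1) unfolding Q_def by auto
    moreover have "Q = mul (dinv e d) (mul d Q)" using nda_dinv_left[OF alg d0] by simp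
    moreover have "mul d Q \<in> Z"
    proof -
      have "mul d Q = mul (a (Suc m)) Q + P" using t(2) unfolding d_def Q_def P_def
        by (simp add: bounded_bilinear.add_left[OF bb])
      moreover have "a (Suc m) \<in> Z" using aZ by simp
      ultimately show ?thesis using t(3,4) ring unfolding subring_def Q_def P_def by metis
    qed
    moreover have "norm (mul d Q) * norm (dinv e d - x m) < 1"
    proof -
      have "norm (mul d Q) * norm (dinv e d - x m) = norm d * norm Q * (norm (d - D) / (norm d * norm D))"
        using dist_dinv[OF ne d0 D0] k1(1) nda_norm[OF alg] unfolding D_def by simp
      also have "\<dots> = norm Q * norm (t - x (Suc m)) / norm D"
        using dpos unfolding d_def D_def by (simp add: field_simps)
      also have "\<dots> \<le> norm Q * norm (t - x (Suc m))"
        using k1(3) unfolding D_def by (intro div_le_self_real) auto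
      finally show ?thesis using t(5) unfolding Q_def by linarith
    qed
    ultimately show ?case using Qs nk t(3) unfolding Q_def by auto
  }
qed


theorem lemma2p5:
  fixes mul :: "'a::euclidean_space \<Rightarrow> 'a \<Rightarrow> 'a" and e :: 'a
    and Z :: "'a set" and a :: "nat \<Rightarrow> 'a" and x :: "nat \<Rightarrow> 'a"
  assumes alg: "normed_div_alg mul e"
    and ring: "subring mul e Z"
    and disc: "\<forall>z\<in>Z. \<not> z islimpt Z"
    and conj_closed: "\<forall>z\<in>Z. cnj e z \<in> Z"
    and aZ: "\<forall>n\<ge>1. a n \<in> Z"
    and defined: "\<forall>n. x n \<noteq> 0"
    and orbit: "\<forall>n. x (Suc n) = Tmap e (a (Suc n)) (x n)"
    and small: "\<forall>n. norm (x n) < 1"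
  shows "\<forall>n i. 1 \<le> i \<and> i < n \<longrightarrow> Qc mul e a i n \<noteq> 0"
proof (intro allI impI)
  fix n i :: nat assume h: "1 \<le> i \<and> i < n"
  then have "n - i < n" by simp
  from main_ind[OF alg ring disc conj_closed aZ defined orbit small this]
  show "Qc mul e a i n \<noteq> 0" unfolding Qc_def by blast
qed

end
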